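(* A metrizable space $X$ satisfies $S_1(\mathcal{K}_{\Omega},\mathcal{K}_{\Omega})$ if and only if $vet_1(Q_p(X,\mathbb{D}))=\omega$.
   Context: A function $f:X\to Y$ is quasicontinuous if for every $x\in X$, every open $V\ni f(x)$ and every open $U\ni x$ there is a nonempty open $W\subseteq U$ with $f(W)\subseteq V$. $Q_p(X,\mathbb{D})$ is the space of quasicontinuous functions from $X$ to the discrete space $\mathbb{D}=\{0,1\}$ with the topology of pointwise convergence. $\mathcal{K}_\Omega$ is the set of families $\mathcal{U}$ of open subsets of $X$ with $X=\bigcup\{\overline{U}:U\in\mathcal{U}\}$, no element of $\mathcal{U}$ dense in $X$, and for each finite $F\subseteq X$ some $U\in\mathcal{U}$ with $F\subseteq\overline{U}$. $S_1(\mathcal{A},\mathcal{B})$: for every sequence $(A_n)_{n\in\mathbb{N}}$ of elements of $\mathcal{A}$ there are $b_n\in A_n$ with $\{b_n:n\in\mathbb{N}\}\in\mathcal{B}$. $vet_1(Z)=\omega$ means: for every $z\in Z$ and every sequence $(A_n)_{n\in\omega}$ of subsets of $Z$ with $z\in\bigcap_n\overline{A_n}$ there are $a_n\in A_n$ with $z\in\overline{\{a_n:n\in\omega\}}$. *)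

theory Defs
  imports "HOL-Analysis.Analysis"
begin

definition quasicontinuous_map :: "'a topology \<Rightarrow> 'b topology \<Rightarrow> ('a \<Rightarrow> 'b) \<Rightarrow> bool" where
  "quasicontinuous_map X Y f \<longleftrightarrow>
     f \<in> topspace X \<rightarrow> topspace Y \<and>
     (\<forall>x\<in>topspace X. \<forall>V U. openin Y V \<and> f x \<in> V \<and> openin X U \<and> x \<in> U \<longrightarrow>
        (\<exists>W. openin X W \<and> W \<noteq> {} \<and> W \<subseteq> U \<and> f ` W \<subseteq> V))"

text \<open>The discrete two-point space D = {0,1}, represented by bool.\<close>
abbreviation D2 :: "bool topology" where
  "D2 \<equiv> discrete_topology UNIV"

text \<open>Q_p(X,D): quasicontinuous functions X -> D with the topology of pointwise
  convergence, i.e. as a subspace of the product D^X (functions are extensional: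
  undefined outside topspace X).\<close>
definition Qp :: "'a topology \<Rightarrow> ('a \<Rightarrow> bool) topology" where
  "Qp X = subtopology (product_topology (\<lambda>_. D2) (topspace X))
            {f \<in> extensional (topspace X). quasicontinuous_map X D2 f}"

definition K_Omega :: "'a topology \<Rightarrow> 'a set set set" where
  "K_Omega X = {\<U>. (\<forall>U\<in>\<U>. openin X U) \<and>
                   topspace X = \<Union>{X closure_of U | U. U \<in> \<U>} \<and>
                   (\<forall>U\<in>\<U>. X closure_of U \<noteq> topspace X) \<and>
                   (\<forall>F. finite F \<and> F \<subseteq> topspace X \<longrightarrow> (\<exists>U\<in>\<U>. F \<subseteq> X closure_of U))}"

definition S1 :: "'b set set \<Rightarrow> 'b set set \<Rightarrow> bool" where
  "S1 \<A> \<B> \<longleftrightarrow> (\<forall>A :: nat \<Rightarrow> 'b set. (\<forall>n. A n \<in> \<A>) \<longrightarrow>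
                 (\<exists>b. (\<forall>n. b n \<in> A n) \<and> range b \<in> \<B>))"

definition vet1_omega :: "'z topology \<Rightarrow> bool" where
  "vet1_omega Z \<longleftrightarrow> (\<forall>z\<in>topspace Z. \<forall>A :: nat \<Rightarrow> 'z set.
      (\<forall>n. A n \<subseteq> topspace Z) \<and> (\<forall>n. z \<in> Z closure_of A n) \<longrightarrow>
      (\<exists>a. (\<forall>n. a n \<in> A n) \<and> z \<in> Z closure_of range a))"

end

theory Submission
  imports Defs
begin


lemma topspace_Qp: "topspace (Qp X) = {f \<in> extensional (topspace X). quasicontinuous_map X D2 f}"
  unfolding Qp_def by (auto simp: PiE_def)

lemma Qp_closure:
  assumes S: "S \<subseteq> topspace (Qp X)" and z: "z \<in> topspace (Qp X)"
  shows "z \<in> Qp X closure_of S \<longleftrightarrow> (\<forall>F. finite F \<and> F \<subseteq> topspace X \<longrightarrow> (\<exists>s\<in>S. \<forall>x\<in>F. s x = z x))"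
proof -
  let ?P = "product_topology (\<lambda>_. D2) (topspace X)"
  let ?T = "{f \<in> extensional (topspace X). quasicontinuous_map X D2 f}"
  have ST: "?T \<inter> S = S" using S by (auto simp: topspace_Qp)
  have zT: "z \<in> ?T" using z by (simp add: topspace_Qp)
  have "z \<in> Qp X closure_of S \<longleftrightarrow> z \<in> ?P closure_of S"
    unfolding Qp_def closure_of_subtopology ST using zT by auto
  also have "\<dots> \<longleftrightarrow> (\<forall>F. finite F \<and> F \<subseteq> topspace X \<longrightarrow> (\<exists>s\<in>S. \<forall>x\<in>F. s x = z x))"
  proof
    assume L: "z \<in> ?P closure_of S"
    show "\<forall>F. finite F \<and> F \<subseteq> topspace X \<longrightarrow> (\<exists>s\<in>S. \<forall>x\<in>F. s x = z x)"
    proof (intro allI impI)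
      fix F assume F: "finite F \<and> F \<subseteq> topspace X"
      define Ob where "Ob = PiE (topspace X) (\<lambda>i. if i \<in> F then {z i} else UNIV)"
      have "openin ?P Ob" unfolding Ob_def openin_PiE_gen
        by (rule disjI2, rule conjI, rule finite_subset[of _ F]) (use F in auto)
      moreover have "z \<in> Ob" using zT unfolding Ob_def by (auto simp: PiE_def extensional_def)
      ultimately obtain y where "y \<in> S" "y \<in> Ob" using L unfolding in_closure_of by blast
      moreover have "\<forall>x\<in>F. y x = z x"
      proof
        fix x assume "x \<in> F"
        then have "x \<in> topspace X" using F by auto
        then have "y x \<in> (if x \<in> F then {z x} else UNIV)" using \<open>y \<in> Ob\<close> unfolding Ob_def by blast
        then show "y x = z x" using \<open>x \<in> F\<close> by simp
      qed
      ultimately show "\<exists>s\<in>S. \<forall>x\<in>F. s x = z x" by blast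
    qed
  next
    assume R: "\<forall>F. finite F \<and> F \<subseteq> topspace X \<longrightarrow> (\<exists>s\<in>S. \<forall>x\<in>F. s x = z x)"
    show "z \<in> ?P closure_of S" unfolding in_closure_of
    proof (intro conjI allI impI)
      show "z \<in> topspace ?P" using zT by (auto simp: PiE_def)
      fix Ob assume "z \<in> Ob \<and> openin ?P Ob"
      then obtain U where U: "finite {i \<in> topspace X. U i \<noteq> UNIV}" "z \<in> PiE (topspace X) U"
          "PiE (topspace X) U \<subseteq> Ob"
        unfolding openin_product_topology_alt by auto
      then obtain s where s: "s \<in> S" "\<forall>x\<in>{i \<in> topspace X. U i \<noteq> UNIV}. s x = z x"
        using R by (metis (no_types, lifting) mem_Collect_eq subsetI)
      have "s \<in> extensional (topspace X)" using s(1) S by (auto simp: topspace_Qp)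
      moreover have "s x \<in> U x" if "x \<in> topspace X" for x
      proof (cases "U x = UNIV")
        case False
        then show ?thesis using s(2) U(2) that by auto
      qed simp
      ultimately have "s \<in> PiE (topspace X) U" by (auto simp: PiE_def)
      then show "\<exists>y. y \<in> S \<and> y \<in> Ob" using s(1) U(3) by blast
    qed
  qed
  finally show ?thesis .
qed

lemma qc_indicator:
  assumes U: "openin X U"
  shows "restrict (\<lambda>x. x \<in> X closure_of U) (topspace X) \<in> topspace (Qp X)"
proof -
  let ?f = "restrict (\<lambda>x. x \<in> X closure_of U) (topspace X)"
  have "quasicontinuous_map X D2 ?f"
    unfolding quasicontinuous_map_def
  proof (intro conjI ballI allI impI)
    show "?f \<in> topspace X \<rightarrow> topspace D2" by simp
    fix x V W assume x: "x \<in> topspace X" and h: "openin D2 V \<and> ?f x \<in> V \<and> openin X W \<and> x \<in> W"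
    show "\<exists>W'. openin X W' \<and> W' \<noteq> {} \<and> W' \<subseteq> W \<and> ?f ` W' \<subseteq> V"
    proof (cases "x \<in> X closure_of U")
      case True
      then obtain y where y: "y \<in> U" "y \<in> W" using h unfolding in_closure_of by blast
      have "U \<subseteq> X closure_of U" using U by (simp add: closure_of_subset openin_subset)
      moreover have "U \<subseteq> topspace X" using U by (simp add: openin_subset)
      ultimately have "?f ` (W \<inter> U) \<subseteq> V" using h True x by auto
      then show ?thesis using y h U by (intro exI[of _ "W \<inter> U"]) auto
    next
      case False
      have "openin X (W - X closure_of U)" using h by (simp add: openin_diff)
      moreover have "?f ` (W - X closure_of U) \<subseteq> V" using h False x openin_subset[of X W] by auto
      ultimately show ?thesis using False h by (intro exI[of _ "W - X closure_of U"]) auto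
    qed
  qed
  then show ?thesis by (simp add: topspace_Qp)
qed

lemma K_Omega_open: "\<U> \<in> K_Omega X \<Longrightarrow> U \<in> \<U> \<Longrightarrow> openin X U"
  unfolding K_Omega_def mem_Collect_eq by (elim conjE) (erule bspec)
lemma K_Omega_nd: "\<U> \<in> K_Omega X \<Longrightarrow> U \<in> \<U> \<Longrightarrow> X closure_of U \<noteq> topspace X"
  unfolding K_Omega_def mem_Collect_eq by (elim conjE) (erule bspec)
lemma K_Omega_fin: "\<U> \<in> K_Omega X \<Longrightarrow> finite F \<Longrightarrow> F \<subseteq> topspace X \<Longrightarrow> \<exists>U\<in>\<U>. F \<subseteq> X closure_of U"
  unfolding K_Omega_def mem_Collect_eq by (elim conjE) (drule spec[of _ F], simp)
lemma K_Omega_intro: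
  assumes "\<And>U. U \<in> \<U> \<Longrightarrow> openin X U" "\<And>U. U \<in> \<U> \<Longrightarrow> X closure_of U \<noteq> topspace X"
    "\<And>F. finite F \<Longrightarrow> F \<subseteq> topspace X \<Longrightarrow> \<exists>U\<in>\<U>. F \<subseteq> X closure_of U"
  shows "\<U> \<in> K_Omega X"
proof -
  have "topspace X = \<Union>{X closure_of U | U. U \<in> \<U>}"
  proof
    show "topspace X \<subseteq> \<Union>{X closure_of U | U. U \<in> \<U>}"
    proof
      fix x assume "x \<in> topspace X"
      then obtain U where "U \<in> \<U>" "{x} \<subseteq> X closure_of U" using assms(3)[of "{x}"] by auto
      then show "x \<in> \<Union>{X closure_of U | U. U \<in> \<U>}" by blast
    qed
  qed (use closure_of_subset_topspace in fastforce)
  then show ?thesis using assms unfolding K_Omega_def mem_Collect_eq by (intro conjI ballI allI impI) auto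
qed

lemma vet1_S1:
  assumes V: "vet1_omega (Qp X)"
  shows "S1 (K_Omega X) (K_Omega X)"
  unfolding S1_def
proof (intro allI impI)
  fix A :: "nat \<Rightarrow> 'a set set" assume A: "\<forall>n. A n \<in> K_Omega X"
  define f where "f U = restrict (\<lambda>x. x \<in> X closure_of U) (topspace X)" for U
  define z where "z = restrict (\<lambda>x. True) (topspace X)"
  define B where "B n = f ` A n" for n
  have fT: "f U \<in> topspace (Qp X)" if "U \<in> A n" for U n
    using K_Omega_open[OF A[rule_format] that] qc_indicator unfolding f_def by blast
  have BT: "B n \<subseteq> topspace (Qp X)" for n using fT unfolding B_def by blast
  have zT: "z \<in> topspace (Qp X)"
  proof -
    have "topspace X \<subseteq> X closure_of topspace X" by (simp add: closure_of_subset)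
    then have "z = f (topspace X)" unfolding z_def f_def by (auto simp: restrict_def)
    then show ?thesis using qc_indicator[of X "topspace X"] f_def by simp
  qed
  have "z \<in> Qp X closure_of B n" for n
    unfolding Qp_closure[OF BT zT]
  proof (intro allI impI)
    fix F assume F: "finite F \<and> F \<subseteq> topspace X"
    then obtain U where "U \<in> A n" "F \<subseteq> X closure_of U" using K_Omega_fin[OF A[rule_format]] by blast
    moreover have "\<forall>x\<in>F. f U x = z x" using \<open>F \<subseteq> X closure_of U\<close> F unfolding f_def z_def by auto
    ultimately show "\<exists>s\<in>B n. \<forall>x\<in>F. s x = z x" unfolding B_def by blast
  qed
  then have "\<exists>a. (\<forall>n. a n \<in> B n) \<and> z \<in> Qp X closure_of range a"
    using V zT BT unfolding vet1_omega_def by blast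
  then obtain a where a: "\<forall>n. a n \<in> B n" and za: "z \<in> Qp X closure_of range a" by blast
  define b where "b n = (SOME U. U \<in> A n \<and> f U = a n)" for n
  have b: "b n \<in> A n \<and> f (b n) = a n" for n
  proof -
    obtain U where "U \<in> A n" "a n = f U" using a unfolding B_def by blast
    then show ?thesis unfolding b_def by (metis (mono_tags, lifting) someI_ex)
  qed
  have raT: "range a \<subseteq> topspace (Qp X)" using a BT by blast
  have cov: "\<exists>n. F \<subseteq> X closure_of b n" if F: "finite F" "F \<subseteq> topspace X" for F
  proof -
    obtain s where "s \<in> range a" "\<forall>x\<in>F. s x = z x" using za F unfolding Qp_closure[OF raT zT] by blast
    then obtain n where "\<forall>x\<in>F. a n x = z x" by blast
    then have "\<forall>x\<in>F. f (b n) x" using b[of n] F unfolding z_def by (simp add: subset_iff)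
    then show ?thesis using F unfolding f_def by (auto simp: subset_iff)
  qed
  have "(\<forall>n. b n \<in> A n) \<and> range b \<in> K_Omega X"
  proof (intro conjI allI)
    show "b n \<in> A n" for n using b by blast
    show "range b \<in> K_Omega X"
    proof (rule K_Omega_intro)
      fix U assume "U \<in> range b"
      then obtain n where "U = b n" by blast
      then show "openin X U" "X closure_of U \<noteq> topspace X" using b[of n] K_Omega_open K_Omega_nd A by blast+
    next
      fix F assume "finite F" "F \<subseteq> topspace X"
      then show "\<exists>U\<in>range b. F \<subseteq> X closure_of U" using cov by blast
    qed
  qed
  then show "\<exists>b. (\<forall>n. b n \<in> A n) \<and> range b \<in> K_Omega X" by blast
qed



context Metric_space begin

lemma lemM:
  assumes V: "openin mtopology V" and x: "x \<in> mtopology closure_of V" and e: "\<epsilon> > 0"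
  shows "\<exists>U. openin mtopology U \<and> U \<subseteq> V \<and> U \<subseteq> mball x \<epsilon> \<and> x \<in> mtopology closure_of U
            \<and> mtopology closure_of U \<subseteq> V \<union> {x}"
proof -
  define r where "r k = min (\<epsilon>/2) (inverse (real (Suc k)))" for k
  have rpos: "r k > 0" for k using e unfolding r_def by auto
  have xM: "x \<in> M" using x closure_of_subset_topspace by fastforce
  have "\<exists>y t. y \<in> V \<and> d x y < r k \<and> t > 0 \<and> t \<le> r k \<and> mcball y t \<subseteq> V" for k
  proof -
    obtain y where y: "y \<in> V" "y \<in> mball x (r k)" using x rpos[of k] unfolding metric_closure_of by blast
    then obtain s where s: "s > 0" "mball y s \<subseteq> V" using V unfolding openin_mtopology by blast
    have "mcball y (min (s/2) (r k)) \<subseteq> V"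
      using s mcball_subset_mball_concentric[of "min (s/2) (r k)" s y] by auto
    then show ?thesis using y s rpos[of k] by (intro exI[of _ y] exI[of _ "min (s/2) (r k)"]) auto
  qed
  then obtain y t where yt: "\<And>k. y k \<in> V \<and> d x (y k) < r k \<and> t k > 0 \<and> t k \<le> r k \<and> mcball (y k) (t k) \<subseteq> V"
    by metis
  have VM: "V \<subseteq> M" using V openin_subset by fastforce
  have yM: "y k \<in> M" for k using yt VM by blast
  define U where "U = (\<Union>k. mball (y k) (t k))"
  have Uo: "openin mtopology U" unfolding U_def by blast
  have UV: "U \<subseteq> V" unfolding U_def using yt mball_subset_mcball by blast
  have ball_small: "mball (y k) (t k) \<subseteq> mball x (2 * r k)" for k
  proof
    fix p assume "p \<in> mball (y k) (t k)"
    then have "p \<in> M" "d (y k) p < t k" by auto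
    moreover have "d x p \<le> d x (y k) + d (y k) p" using triangle xM yM \<open>p \<in> M\<close> by blast
    ultimately show "p \<in> mball x (2 * r k)" using yt[of k] xM by auto
  qed
  have "U \<subseteq> mball x \<epsilon>"
  proof -
    have "mball x (2 * r k) \<subseteq> mball x \<epsilon>" for k by (rule mball_subset_concentric) (simp add: r_def)
    then show ?thesis unfolding U_def using ball_small by blast
  qed
  have lim: "\<forall>\<^sub>F k in sequentially. r k < \<delta>" if "\<delta> > 0" for \<delta>
  proof -
    have "\<forall>\<^sub>F k in sequentially. inverse (real (Suc k)) < \<delta>"
      using order_tendstoD(2)[OF LIMSEQ_inverse_real_of_nat that] .
    then show ?thesis by eventually_elim (simp add: r_def)
  qed
  have xU: "x \<in> mtopology closure_of U"
    unfolding metric_closure_of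
  proof (intro CollectI conjI allI impI xM)
    fix \<delta> :: real assume "\<delta> > 0"
    then obtain k where "r k < \<delta>" using lim eventually_sequentially by (metis order_refl)
    then have "y k \<in> mball x \<delta>" using yt[of k] xM yM by auto
    moreover have "y k \<in> mball (y k) (t k)" using yt[of k] yM by auto
    then have "y k \<in> U" unfolding U_def by blast
    ultimately show "\<exists>y\<in>U. y \<in> mball x \<delta>" by blast
  qed
  have clU: "mtopology closure_of U \<subseteq> V \<union> {x}"
  proof
    fix p assume p: "p \<in> mtopology closure_of U"
    show "p \<in> V \<union> {x}"
    proof (cases "p = x")
      case False
      have pM: "p \<in> M" using p closure_of_subset_topspace by fastforce
      define \<delta> where "\<delta> = d x p"
      have dpos: "\<delta> > 0" using False pM xM unfolding \<delta>_def by simp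
      obtain K where K: "\<And>k. k \<ge> K \<Longrightarrow> r k < \<delta>/4"
        using lim[of "\<delta>/4"] dpos unfolding eventually_sequentially by auto
      define U1 where "U1 = (\<Union>k\<in>{..<K}. mball (y k) (t k))"
      define U2 where "U2 = (\<Union>k\<in>{K..}. mball (y k) (t k))"
      have "UNIV = {..<K} \<union> {K..}" by auto
      then have "U = U1 \<union> U2" unfolding U_def U1_def U2_def by (metis UN_Un)
      then have "p \<in> mtopology closure_of U1 \<union> mtopology closure_of U2" using p by simp
      moreover have "mtopology closure_of U2 \<subseteq> mcball x (\<delta>/2)"
      proof (rule closure_of_minimal)
        show "closedin mtopology (mcball x (\<delta>/2))" by simp
        show "U2 \<subseteq> mcball x (\<delta>/2)"
        proof
          fix q assume "q \<in> U2"
          then obtain k where "k \<ge> K" "q \<in> mball (y k) (t k)" unfolding U2_def by auto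
          then have "q \<in> mball x (2 * r k)" using ball_small by blast
          then show "q \<in> mcball x (\<delta>/2)" using K[OF \<open>k \<ge> K\<close>] by auto
        qed
      qed
      moreover have "p \<notin> mcball x (\<delta>/2)" using dpos unfolding \<delta>_def by auto
      moreover have "mtopology closure_of U1 \<subseteq> (\<Union>k\<in>{..<K}. mcball (y k) (t k))"
      proof (rule closure_of_minimal)
        show "closedin mtopology (\<Union>k\<in>{..<K}. mcball (y k) (t k))"
          by (intro closedin_Union) auto
        show "U1 \<subseteq> (\<Union>k\<in>{..<K}. mcball (y k) (t k))" unfolding U1_def using mball_subset_mcball by blast
      qed
      moreover have "(\<Union>k\<in>{..<K}. mcball (y k) (t k)) \<subseteq> V" using yt by blast
      ultimately show ?thesis by blast
    qed simp
  qed
  show ?thesis using Uo UV \<open>U \<subseteq> mball x \<epsilon>\<close> xU clU by blast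
qed

end


lemma qc_apply:
  assumes "quasicontinuous_map X D2 g" "x \<in> topspace X" "openin X U" "x \<in> U"
  shows "\<exists>W. openin X W \<and> W \<noteq> {} \<and> W \<subseteq> U \<and> g ` W \<subseteq> {g x}"
proof -
  have "openin D2 {g x}" by simp
  then show ?thesis using assms unfolding quasicontinuous_map_def by blast
qed

definition Vz :: "'a topology \<Rightarrow> ('a \<Rightarrow> bool) \<Rightarrow> 'a set" where
  "Vz X z = {x \<in> topspace X. x \<in> X interior_of {p \<in> topspace X. z p = z x}}"

lemma Vz_open: "openin X (Vz X z)"
proof -
  have "\<exists>T. openin X T \<and> x \<in> T \<and> T \<subseteq> Vz X z" if x: "x \<in> Vz X z" for x
  proof -
    define O1 where "O1 = X interior_of {p \<in> topspace X. z p = z x}"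
    have "O1 \<subseteq> Vz X z"
    proof
      fix y assume y: "y \<in> O1"
      have y1: "y \<in> {p \<in> topspace X. z p = z x}" using y unfolding O1_def by (rule subsetD[OF interior_of_subset])
      then have "z y = z x" by simp
      then have "{p \<in> topspace X. z p = z y} = {p \<in> topspace X. z p = z x}" by simp
      then have "y \<in> X interior_of {p \<in> topspace X. z p = z y}" using y unfolding O1_def by simp
      then show "y \<in> Vz X z" using y1 unfolding Vz_def by blast
    qed
    moreover have "x \<in> O1" using x unfolding Vz_def O1_def by blast
    moreover have "openin X O1" unfolding O1_def by simp
    ultimately show ?thesis by blast
  qed
  then show ?thesis by (subst openin_subopen) blast
qed

lemma Vz_dense:
  assumes z: "quasicontinuous_map X D2 z" and x: "x \<in> topspace X"
  shows "x \<in> X closure_of (Vz X z)"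
  unfolding in_closure_of
proof (intro conjI allI impI x)
  fix T assume T: "x \<in> T \<and> openin X T"
  obtain W where W: "openin X W" "W \<noteq> {}" "W \<subseteq> T" "z ` W \<subseteq> {z x}"
    using qc_apply[OF z x, of T] T by blast
  obtain y where y: "y \<in> W" using W(2) by blast
  have WM: "W \<subseteq> topspace X" using W(1) openin_subset by blast
  have "W \<subseteq> {p \<in> topspace X. z p = z y}" using W(4) WM y by auto
  then have "W \<subseteq> X interior_of {p \<in> topspace X. z p = z y}" using W(1) by (rule interior_of_maximal)
  then have "y \<in> Vz X z" using y WM unfolding Vz_def by auto
  then show "\<exists>y. y \<in> Vz X z \<and> y \<in> T" using y W(3) by blast
qed

lemma qc_good:
  assumes g: "quasicontinuous_map X D2 g" and x: "x \<in> Vz X z" and gx: "g x = z x"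
  shows "x \<in> X closure_of (X interior_of {p \<in> topspace X. g p = z p})"
  unfolding in_closure_of
proof (intro conjI allI impI)
  show xM: "x \<in> topspace X" using x unfolding Vz_def by auto
  fix T assume T: "x \<in> T \<and> openin X T"
  let ?O = "X interior_of {p \<in> topspace X. z p = z x}"
  have xO: "x \<in> ?O" using x unfolding Vz_def by auto
  have "openin X (T \<inter> ?O)" using T by (simp add: openin_Int)
  then obtain W where W: "openin X W" "W \<noteq> {}" "W \<subseteq> T \<inter> ?O" "g ` W \<subseteq> {g x}"
    using qc_apply[OF g xM \<open>openin X (T \<inter> ?O)\<close>] T xO by blast
  obtain y where y: "y \<in> W" using W(2) by blast
  have WM: "W \<subseteq> topspace X" using W(1) openin_subset by blast
  have "W \<subseteq> {p \<in> topspace X. g p = z p}"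
  proof
    fix p assume p: "p \<in> W"
    then have "p \<in> ?O" using W(3) by blast
    then have "p \<in> {p \<in> topspace X. z p = z x}" by (rule subsetD[OF interior_of_subset])
    moreover have "g p = g x" using W(4) p by auto
    ultimately show "p \<in> {p \<in> topspace X. g p = z p}" using gx by auto
  qed
  then have "W \<subseteq> X interior_of {p \<in> topspace X. g p = z p}" using W(1) by (rule interior_of_maximal)
  then show "\<exists>y. y \<in> X interior_of {p \<in> topspace X. g p = z p} \<and> y \<in> T" using y W(3) by blast
qed

lemma finite_vet1:
  assumes "finite (topspace X)"
  shows "vet1_omega (Qp X)"
  unfolding vet1_omega_def
proof (intro ballI allI impI)
  fix z A assume z: "z \<in> topspace (Qp X)" and A: "(\<forall>n. A n \<subseteq> topspace (Qp X)) \<and> (\<forall>n. z \<in> Qp X closure_of A n)"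
  have "z \<in> A n" for n
  proof -
    have An: "A n \<subseteq> topspace (Qp X)" and zA: "z \<in> Qp X closure_of A n" using A by auto
    have "\<forall>F. finite F \<and> F \<subseteq> topspace X \<longrightarrow> (\<exists>s\<in>A n. \<forall>x\<in>F. s x = z x)"
      using Qp_closure[OF An z] zA by simp
    then obtain s where s: "s \<in> A n" "\<forall>x\<in>topspace X. s x = z x"
      using assms by blast
    have "s \<in> extensional (topspace X)" "z \<in> extensional (topspace X)"
      using s(1) A z by (auto simp: topspace_Qp)
    then have "s = z" using s(2) by (intro extensionalityI) auto
    then show ?thesis using s by simp
  qed
  moreover have "z \<in> Qp X closure_of range (\<lambda>n. z)" using z closure_of_subset[of "{z}" "Qp X"] by simp
  ultimately show "\<exists>a. (\<forall>n. a n \<in> A n) \<and> z \<in> Qp X closure_of range a" by (intro exI[of _ "\<lambda>n. z"]) blast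
qed

context Metric_space begin

lemma countable_nd:
  assumes S: "S1 (K_Omega mtopology) (K_Omega mtopology)" and V: "openin mtopology V"
    and dense: "\<And>x. x \<in> M \<Longrightarrow> x \<in> mtopology closure_of V"
  shows "countable (M - V)"
proof (rule ccontr)
  assume unc: "\<not> countable (M - V)"
  define N where "N = M - V"
  define W where "W = {U. openin mtopology U \<and> mtopology closure_of U \<noteq> M \<and> finite (mtopology closure_of U \<inter> N)}"
  have "W \<in> K_Omega mtopology"
  proof (rule K_Omega_intro)
    show "openin mtopology U" "mtopology closure_of U \<noteq> topspace mtopology" if "U \<in> W" for U
      using that unfolding W_def by auto
    fix F assume F: "finite F" "F \<subseteq> topspace mtopology"
    have "\<forall>x\<in>F. \<exists>U. openin mtopology U \<and> x \<in> mtopology closure_of U \<and> mtopology closure_of U \<subseteq> V \<union> {x}"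
    proof
      fix x assume "x \<in> F"
      then have "x \<in> M" using F(2) by auto
      then have "x \<in> mtopology closure_of V" by (rule dense)
      from lemM[OF V this, of 1] have "\<exists>U. openin mtopology U \<and> U \<subseteq> V \<and> U \<subseteq> mball x 1 \<and> x \<in> mtopology closure_of U \<and> mtopology closure_of U \<subseteq> V \<union> {x}" by simp
      then show "\<exists>U. openin mtopology U \<and> x \<in> mtopology closure_of U \<and> mtopology closure_of U \<subseteq> V \<union> {x}"
        by (elim exE) (intro exI, blast)
    qed
    from bchoice[OF this] obtain Uf where Uf0: "\<forall>x\<in>F. openin mtopology (Uf x) \<and> x \<in> mtopology closure_of (Uf x) \<and> mtopology closure_of (Uf x) \<subseteq> V \<union> {x}"
      by blast
    then have Uf: "\<And>x. x \<in> F \<Longrightarrow> openin mtopology (Uf x) \<and> x \<in> mtopology closure_of (Uf x) \<and> mtopology closure_of (Uf x) \<subseteq> V \<union> {x}"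
      by blast
    define U where "U = (\<Union>x\<in>F. Uf x)"
    have clU: "mtopology closure_of U = (\<Union>x\<in>F. mtopology closure_of (Uf x))"
      unfolding U_def using closure_of_Union[of "Uf ` F" mtopology] F by simp
    have Uo: "openin mtopology U" unfolding U_def using Uf by blast
    have FU: "F \<subseteq> mtopology closure_of U" unfolding clU using Uf by blast
    have NF: "mtopology closure_of U \<inter> N \<subseteq> F" unfolding clU N_def using Uf by blast
    have "infinite N" using unc unfolding N_def using countable_finite by blast
    then have "infinite (N - F)" using F(1) by simp
    then have "N - F \<noteq> {}" by (rule infinite_imp_nonempty)
    then obtain q where "q \<in> N - F" by blast
    then have q: "q \<in> N" "q \<notin> F" by auto
    then have "q \<notin> mtopology closure_of U" using NF by blast
    moreover have "q \<in> M" using q unfolding N_def by auto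
    ultimately have "mtopology closure_of U \<noteq> M" by blast
    moreover have "finite (mtopology closure_of U \<inter> N)" using NF F(1) by (rule finite_subset)
    ultimately have "U \<in> W" using Uo unfolding W_def by simp
    then show "\<exists>U\<in>W. F \<subseteq> mtopology closure_of U" using FU by blast
  qed
  then have "\<exists>b::nat \<Rightarrow> 'a set. (\<forall>n. b n \<in> W) \<and> range b \<in> K_Omega mtopology"
    using S[unfolded S1_def, rule_format, of "\<lambda>_. W"] by simp
  then obtain b :: "nat \<Rightarrow> 'a set" where b: "\<forall>n. b n \<in> W" "range b \<in> K_Omega mtopology" by (elim exE conjE)
  have "N \<subseteq> (\<Union>n. mtopology closure_of (b n) \<inter> N)"
  proof
    fix q assume q: "q \<in> N"
    then have "q \<in> topspace mtopology" unfolding N_def by auto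
    then obtain U where "U \<in> range b" "{q} \<subseteq> mtopology closure_of U"
      using K_Omega_fin[OF b(2), of "{q}"] by auto
    then show "q \<in> (\<Union>n. mtopology closure_of (b n) \<inter> N)" using q by auto
  qed
  moreover have "countable (\<Union>n. mtopology closure_of (b n) \<inter> N)"
    using b(1) unfolding W_def by (intro countable_UN) (auto intro: countable_finite)
  ultimately have "countable N" using countable_subset by blast
  then show False using unc unfolding N_def by simp
qed

end


context Metric_space begin

lemma S1_vet1:
  assumes S: "S1 (K_Omega mtopology) (K_Omega mtopology)" and inf: "infinite M"
  shows "vet1_omega (Qp mtopology)"
  unfolding vet1_omega_def
proof (intro ballI allI impI)
  fix z and A :: "nat \<Rightarrow> ('a \<Rightarrow> bool) set"
  assume z: "z \<in> topspace (Qp mtopology)"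
    and A: "(\<forall>n. A n \<subseteq> topspace (Qp mtopology)) \<and> (\<forall>n. z \<in> Qp mtopology closure_of A n)"
  have An: "A n \<subseteq> topspace (Qp mtopology)" for n using A by blast
  have zA: "z \<in> Qp mtopology closure_of A n" for n using A by blast
  have zq: "quasicontinuous_map mtopology D2 z" using z by (simp add: topspace_Qp)
  have gq: "quasicontinuous_map mtopology D2 g" if "g \<in> A n" for g n
    using An[of n] that by (auto simp: topspace_Qp)
  have approx: "\<exists>g\<in>A n. \<forall>x\<in>F. g x = z x" if "finite F" "F \<subseteq> M" for n F
  proof -
    have "\<forall>F. finite F \<and> F \<subseteq> topspace mtopology \<longrightarrow> (\<exists>s\<in>A n. \<forall>x\<in>F. s x = z x)"
      using Qp_closure[OF An z] zA by simp
    then show ?thesis using that by simp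
  qed
  define V where "V = Vz mtopology z"
  define N where "N = M - V"
  have Vo: "openin mtopology V" unfolding V_def by (rule Vz_open)
  have VM: "V \<subseteq> M" using Vo openin_subset by fastforce
  have cN: "countable N" unfolding N_def
  proof (rule countable_nd[OF S Vo])
    fix x assume "x \<in> M"
    then show "x \<in> mtopology closure_of V" unfolding V_def using Vz_dense[OF zq] by simp
  qed
  define c where "c = from_nat_into N"
  have c: "N \<subseteq> range c"
  proof
    fix x assume "x \<in> N"
    then have "c (to_nat_on N x) = x" unfolding c_def using cN by (simp add: from_nat_into_to_nat_on)
    then show "x \<in> range c" by (metis rangeI)
  qed
  define G where "G n = N \<inter> c ` {..<n}" for n
  have finG: "finite (G n)" for n unfolding G_def by simp
  have GM: "G n \<subseteq> M" for n unfolding G_def N_def by blast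
  define \<rho> where "\<rho> n = inverse (real (Suc n))" for n
  have \<rho>pos: "\<rho> n > 0" for n unfolding \<rho>_def by simp
  define Good where "Good g U n \<longleftrightarrow> g \<in> A n \<and> (\<forall>x\<in>G n. g x = z x) \<and>
      (\<forall>p \<in> mtopology closure_of U. (\<forall>y\<in>N. \<rho> n \<le> d p y) \<longrightarrow> g p = z p)" for g U n
  define \<U> where "\<U> n = {U. openin mtopology U \<and> mtopology closure_of U \<noteq> M \<and> (\<exists>g. Good g U n)}" for n
  have UK: "\<U> n \<in> K_Omega mtopology" for n
  proof (rule K_Omega_intro)
    show "openin mtopology U" "mtopology closure_of U \<noteq> topspace mtopology" if "U \<in> \<U> n" for U
      using that unfolding \<U>_def by auto
    fix F assume F: "finite F" "F \<subseteq> topspace mtopology"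
    then have FM: "F \<subseteq> M" by simp
    have "finite (F \<union> G n)" using F(1) finG by simp
    moreover have "F \<union> G n \<subseteq> M" using FM GM by blast
    ultimately obtain g where g: "g \<in> A n" "\<forall>x\<in>F \<union> G n. g x = z x" using approx by blast
    have gq': "quasicontinuous_map mtopology D2 g" using gq g(1) by blast
    have "infinite (M - F)" using inf F(1) by simp
    then have "M - F \<noteq> {}" by (rule infinite_imp_nonempty)
    then obtain q where q: "q \<in> M" "q \<notin> F" by blast
    define P where "P U \<longleftrightarrow> (\<forall>p \<in> mtopology closure_of U. (\<forall>y\<in>N. \<rho> n \<le> d p y) \<longrightarrow> g p = z p)" for U
    have "\<forall>x\<in>F. \<exists>U. openin mtopology U \<and> x \<in> mtopology closure_of U \<and> q \<notin> mtopology closure_of U \<and> P U"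
    proof
      fix x assume xF: "x \<in> F"
      then have xM: "x \<in> M" and xq: "x \<noteq> q" using FM q by auto
      define \<epsilon> where "\<epsilon> = d x q / 2"
      have epos: "\<epsilon> > 0" unfolding \<epsilon>_def using xM q(1) xq by simp
      have qnot: "q \<notin> mcball x \<epsilon>" unfolding \<epsilon>_def using epos \<epsilon>_def by auto
      show "\<exists>U. openin mtopology U \<and> x \<in> mtopology closure_of U \<and> q \<notin> mtopology closure_of U \<and> P U"
      proof (cases "x \<in> N")
        case True
        define U where "U = mball x (min (\<rho> n / 2) \<epsilon>)"
        have Uo: "openin mtopology U" unfolding U_def by simp
        have "x \<in> U" unfolding U_def using xM epos \<rho>pos[of n] by simp
        moreover have "U \<subseteq> M" unfolding U_def by (rule mball_subset_mspace)
        ultimately have xU: "x \<in> mtopology closure_of U" using closure_of_subset[of U mtopology] by auto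
        have clU: "mtopology closure_of U \<subseteq> mcball x (min (\<rho> n / 2) \<epsilon>)"
          by (rule closure_of_minimal) (auto simp: U_def)
        have "mcball x (min (\<rho> n / 2) \<epsilon>) \<subseteq> mcball x \<epsilon>" by (rule mcball_subset_concentric) simp
        then have qU: "q \<notin> mtopology closure_of U" using clU qnot by blast
        have "P U" unfolding P_def
        proof (intro ballI impI)
          fix p assume p: "p \<in> mtopology closure_of U" and pN: "\<forall>y\<in>N. \<rho> n \<le> d p y"
          then have "d x p \<le> \<rho> n / 2" using clU by auto
          moreover have "\<rho> n \<le> d p x" using pN True by blast
          ultimately have False using \<rho>pos[of n] commute[of x p] by linarith
          then show "g p = z p" ..
        qed
        then show ?thesis using Uo xU qU by blast
      next
        case False
        then have xV: "x \<in> Vz mtopology z" using xM unfolding N_def V_def by blast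
        have gx: "g x = z x" using g(2) xF by blast
        let ?I = "mtopology interior_of {p \<in> topspace mtopology. g p = z p}"
        have "x \<in> mtopology closure_of ?I" by (rule qc_good[OF gq' xV gx])
        from lemM[OF openin_interior_of this epos]
        obtain U where U: "openin mtopology U" "U \<subseteq> mball x \<epsilon>" "x \<in> mtopology closure_of U"
          "mtopology closure_of U \<subseteq> ?I \<union> {x}" by blast
        have "mtopology closure_of U \<subseteq> mcball x \<epsilon>"
          by (rule closure_of_minimal) (use U(2) mball_subset_mcball in auto)
        then have qU: "q \<notin> mtopology closure_of U" using qnot by blast
        have "P U" unfolding P_def
        proof (intro ballI impI)
          fix p assume p: "p \<in> mtopology closure_of U"
          then have "p \<in> ?I \<or> p = x" using U(4) by blast
          then show "g p = z p"
          proof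
            assume "p \<in> ?I"
            then have "p \<in> {p \<in> topspace mtopology. g p = z p}" by (rule subsetD[OF interior_of_subset])
            then show ?thesis by simp
          qed (use gx in simp)
        qed
        then show ?thesis using U(1,3) qU by blast
      qed
    qed
    from bchoice[OF this] obtain Uf where Uf: "\<forall>x\<in>F. openin mtopology (Uf x) \<and> x \<in> mtopology closure_of (Uf x) \<and> q \<notin> mtopology closure_of (Uf x) \<and> P (Uf x)"
      by blast
    define U where "U = (\<Union>x\<in>F. Uf x)"
    have clU: "mtopology closure_of U = (\<Union>x\<in>F. mtopology closure_of (Uf x))"
      unfolding U_def using closure_of_Union[of "Uf ` F" mtopology] F(1) by simp
    have Uo: "openin mtopology U" unfolding U_def using Uf by blast
    have FU: "F \<subseteq> mtopology closure_of U" unfolding clU using Uf by blast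
    have "q \<notin> mtopology closure_of U" unfolding clU using Uf by blast
    then have ndU: "mtopology closure_of U \<noteq> M" using q(1) by blast
    have "P U" unfolding P_def
    proof (intro ballI impI)
      fix p assume "p \<in> mtopology closure_of U" "\<forall>y\<in>N. \<rho> n \<le> d p y"
      then obtain x where "x \<in> F" "p \<in> mtopology closure_of (Uf x)" unfolding clU by blast
      then show "g p = z p" using Uf \<open>\<forall>y\<in>N. \<rho> n \<le> d p y\<close> unfolding P_def by blast
    qed
    then have "Good g U n" unfolding Good_def P_def using g by blast
    then have "U \<in> \<U> n" unfolding \<U>_def using Uo ndU by blast
    then show "\<exists>U\<in>\<U> n. F \<subseteq> mtopology closure_of U" using FU by blast
  qed
  have "\<exists>b::nat \<Rightarrow> 'a set. (\<forall>n. b n \<in> \<U> n) \<and> range b \<in> K_Omega mtopology"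
    using S[unfolded S1_def, rule_format, of \<U>] UK by simp
  then obtain b :: "nat \<Rightarrow> 'a set" where b: "\<forall>n. b n \<in> \<U> n" "range b \<in> K_Omega mtopology"
    by (elim exE conjE)
  define a where "a n = (SOME g. Good g (b n) n)" for n
  have aG: "Good (a n) (b n) n" for n
  proof -
    have "\<exists>g. Good g (b n) n" using b(1) unfolding \<U>_def by blast
    then show ?thesis unfolding a_def by (rule someI_ex)
  qed
  have aA: "a n \<in> A n" for n using aG[of n] unfolding Good_def by blast
  have ndb: "mtopology closure_of (b k) \<noteq> M" for k using b(1) unfolding \<U>_def by blast
  have raT: "range a \<subseteq> topspace (Qp mtopology)" using aA An by blast
  have "z \<in> Qp mtopology closure_of range a"
    unfolding Qp_closure[OF raT z]
  proof (intro allI impI)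
    fix F assume F: "finite F \<and> F \<subseteq> topspace mtopology"
    then have Ff: "finite F" and FM: "F \<subseteq> M" by auto
    have ev1: "\<forall>\<^sub>F n in sequentially. \<forall>x\<in>F \<inter> N. x \<in> G n"
    proof (rule eventually_ball_finite)
      show "finite (F \<inter> N)" using Ff by simp
      show "\<forall>x\<in>F \<inter> N. \<forall>\<^sub>F n in sequentially. x \<in> G n"
      proof
        fix x assume x: "x \<in> F \<inter> N"
        then obtain k where k: "x = c k" using c by blast
        have "x \<in> G n" if "n \<ge> Suc k" for n
          unfolding G_def using x k that by auto
        then show "\<forall>\<^sub>F n in sequentially. x \<in> G n" unfolding eventually_sequentially by blast
      qed
    qed
    have ev2: "\<forall>\<^sub>F n in sequentially. \<forall>x\<in>F - N. \<forall>y\<in>N. \<rho> n \<le> d x y"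
    proof (rule eventually_ball_finite)
      show "finite (F - N)" using Ff by simp
      show "\<forall>x\<in>F - N. \<forall>\<^sub>F n in sequentially. \<forall>y\<in>N. \<rho> n \<le> d x y"
      proof
        fix x assume x: "x \<in> F - N"
        then have "x \<in> V" using FM unfolding N_def by blast
        then obtain r where r: "r > 0" "mball x r \<subseteq> V" using Vo unfolding openin_mtopology by blast
        have dr: "r \<le> d x y" if "y \<in> N" for y
        proof (rule ccontr)
          assume "\<not> r \<le> d x y"
          then have "y \<in> mball x r" using that x FM unfolding N_def by auto
          then show False using r(2) that unfolding N_def by blast
        qed
        have "\<forall>\<^sub>F n in sequentially. \<rho> n < r"
          unfolding \<rho>_def using order_tendstoD(2)[OF LIMSEQ_inverse_real_of_nat r(1)] .
        then show "\<forall>\<^sub>F n in sequentially. \<forall>y\<in>N. \<rho> n \<le> d x y"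
          by eventually_elim (use dr in force)
      qed
    qed
    from eventually_conj[OF ev1 ev2] obtain K where K: "\<And>n. n \<ge> K \<Longrightarrow> (\<forall>x\<in>F \<inter> N. x \<in> G n) \<and> (\<forall>x\<in>F - N. \<forall>y\<in>N. \<rho> n \<le> d x y)"
      unfolding eventually_sequentially by blast
    have "\<forall>k\<in>{..<K}. \<exists>q. q \<in> M \<and> q \<notin> mtopology closure_of (b k)"
      using ndb closure_of_subset_topspace[of mtopology] by fastforce
    from bchoice[OF this] obtain qf where qf: "\<forall>k\<in>{..<K}. qf k \<in> M \<and> qf k \<notin> mtopology closure_of (b k)"
      by blast
    have "finite (F \<union> qf ` {..<K})" using Ff by simp
    moreover have "F \<union> qf ` {..<K} \<subseteq> topspace mtopology" using FM qf by auto
    ultimately obtain U where "U \<in> range b" "F \<union> qf ` {..<K} \<subseteq> mtopology closure_of U"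
      using K_Omega_fin[OF b(2)] by blast
    then obtain n where n: "F \<union> qf ` {..<K} \<subseteq> mtopology closure_of (b n)" by blast
    have "n \<ge> K"
    proof (rule ccontr)
      assume "\<not> n \<ge> K"
      then have "n \<in> {..<K}" by simp
      then show False using qf n by blast
    qed
    note Kn = K[OF this]
    have "\<forall>x\<in>F. a n x = z x"
    proof
      fix x assume xF: "x \<in> F"
      show "a n x = z x"
      proof (cases "x \<in> N")
        case True
        then have "x \<in> G n" using Kn xF by blast
        then show ?thesis using aG[of n] unfolding Good_def by blast
      next
        case False
        then have "\<forall>y\<in>N. \<rho> n \<le> d x y" using Kn xF by blast
        moreover have "x \<in> mtopology closure_of (b n)" using n xF by blast
        ultimately show ?thesis using aG[of n] unfolding Good_def by blast
      qed
    qed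
    then show "\<exists>s\<in>range a. \<forall>x\<in>F. s x = z x" by blast
  qed
  then show "\<exists>a. (\<forall>n. a n \<in> A n) \<and> z \<in> Qp mtopology closure_of range a"
    using aA by blast
qed

end

theorem corollary4p2:
  fixes X :: "'a topology"
  assumes "metrizable_space X"
  shows "S1 (K_Omega X) (K_Omega X) \<longleftrightarrow> vet1_omega (Qp X)"
proof
  assume S: "S1 (K_Omega X) (K_Omega X)"
  obtain M d where md: "Metric_space M d" and X: "X = Metric_space.mtopology M d"
    using assms unfolding metrizable_space_def by blast
  show "vet1_omega (Qp X)"
  proof (cases "finite (topspace X)")
    case True
    then show ?thesis by (rule finite_vet1)
  next
    case False
    then have "infinite M" using Metric_space.topspace_mtopology[OF md] X by simp
    then show ?thesis using Metric_space.S1_vet1[OF md] S X by simp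
  qed
next
  assume "vet1_omega (Qp X)"
  then show "S1 (K_Omega X) (K_Omega X)" by (rule vet1_S1)
qed

end
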